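(* A real Banach space $\mathbb{X}$ is a Hilbert space (i.e., its norm is induced by an inner product) if and only if for every $x\in S_{\mathbb{X}}$ and every $r>0$, $(x,x)$ is a CPP with CPP constant $(r,1)$.
   Context: $\mathbb{X}$ has dimension greater than $1$. $B(x,r)=\{u:\|u-x\|<r\}$. $x\perp_B y$ means $\|x+\lambda y\|\ge\|x\|$ for all real $\lambda$; $x^\perp=\{y:x\perp_By\}$. For $x,y\in S_{\mathbb{X}}$ and $r,\mu>0$, $(x,y)$ is a CPP with CPP constant $(r,\mu)$ if for all $z\in x^\perp\cap S_{\mathbb{X}}$, all $w\in y^\perp\cap S_{\mathbb{X}}$ and all $a,b\in\mathbb{R}$, $ax+bz\in B(x,r)\cap S_{\mathbb{X}}$ implies $\|ay+b\mu w\|\le1$. *)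

theory Defs
  imports "HOL-Analysis.Analysis"
begin

definition bj_orth :: "'a::real_normed_vector \<Rightarrow> 'a \<Rightarrow> bool" where
  "bj_orth x y \<longleftrightarrow> (\<forall>l::real. norm (x + l *\<^sub>R y) \<ge> norm x)"

definition CPP :: "'a::real_normed_vector \<Rightarrow> 'a \<Rightarrow> real \<Rightarrow> real \<Rightarrow> bool" where
  "CPP x y r mu \<longleftrightarrow> norm x = 1 \<and> norm y = 1 \<and> r > 0 \<and> mu > 0 \<and>
     (\<forall>z w. \<forall>a b::real.
        bj_orth x z \<and> norm z = 1 \<and> bj_orth y w \<and> norm w = 1 \<and>
        a *\<^sub>R x + b *\<^sub>R z \<in> ball x r \<and> norm (a *\<^sub>R x + b *\<^sub>R z) = 1
        \<longrightarrow> norm (a *\<^sub>R y + b *\<^sub>R (mu *\<^sub>R w)) \<le> 1)"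

definition norm_from_inner_product :: "'a::real_normed_vector itself \<Rightarrow> bool" where
  "norm_from_inner_product _ \<longleftrightarrow> (\<exists>ip :: 'a \<Rightarrow> 'a \<Rightarrow> real.
     (\<forall>x y. ip x y = ip y x) \<and>
     (\<forall>x y z. ip (x + y) z = ip x z + ip y z) \<and>
     (\<forall>c x y. ip (c *\<^sub>R x) y = c * ip x y) \<and>
     (\<forall>x. ip x x \<ge> 0) \<and>
     (\<forall>x. norm x = sqrt (ip x x)))"

definition dim_gt_one :: "'a::real_normed_vector itself \<Rightarrow> bool" where
  "dim_gt_one _ \<longleftrightarrow> (\<exists>x y :: 'a. x \<noteq> y \<and> independent {x, y})"

end

theory Submission
  imports Defs
begin


lemma bj_zero_left: "bj_orth 0 z" by (simp add: bj_orth_def)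
lemma bj_zero_right: "bj_orth x 0" by (simp add: bj_orth_def)

lemma bj_scale:
  assumes "bj_orth x z" shows "bj_orth (c *\<^sub>R x) (d *\<^sub>R z)"
  unfolding bj_orth_def
proof
  fix l :: real
  show "norm (c *\<^sub>R x) \<le> norm (c *\<^sub>R x + l *\<^sub>R d *\<^sub>R z)"
  proof (cases "c = 0")
    case True then show ?thesis by simp
  next
    case False
    have "c *\<^sub>R x + l *\<^sub>R d *\<^sub>R z = c *\<^sub>R (x + (l*d/c) *\<^sub>R z)"
      using False by (simp add: algebra_simps)
    hence "norm (c *\<^sub>R x + l *\<^sub>R d *\<^sub>R z) = \<bar>c\<bar> * norm (x + (l*d/c) *\<^sub>R z)" by simp
    moreover have "norm x \<le> norm (x + (l*d/c) *\<^sub>R z)" using assms by (simp add: bj_orth_def)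
    ultimately show ?thesis by (simp add: mult_left_mono)
  qed
qed

lemma iso_scaled:
  fixes x z :: "'a::real_normed_vector"
  assumes iso: "\<And>u v::'a. bj_orth u v \<Longrightarrow> norm (u + v) = norm (u - v)"
    and o: "bj_orth x z"
  shows "norm (a *\<^sub>R x + b *\<^sub>R z) = norm (a *\<^sub>R x - b *\<^sub>R z)"
  using iso[OF bj_scale[OF o, of a b]] .

lemma orth_sym:
  fixes x z :: "'a::real_normed_vector"
  assumes iso: "\<And>u v::'a. bj_orth u v \<Longrightarrow> norm (u + v) = norm (u - v)"
    and o: "bj_orth x z"
  shows "bj_orth z x"
  unfolding bj_orth_def
proof
  fix m :: real
  have e: "norm (m *\<^sub>R x + 1 *\<^sub>R z) = norm (m *\<^sub>R x - 1 *\<^sub>R z)" by (rule iso_scaled[OF iso o])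
  have "norm (z - m *\<^sub>R x) = norm (z + m *\<^sub>R x)"
    using e by (simp add: norm_minus_commute add.commute)
  have "2 *\<^sub>R z = (z + m *\<^sub>R x) + (z - m *\<^sub>R x)" by (simp add: scaleR_2)
  hence "2 * norm z \<le> norm (z + m *\<^sub>R x) + norm (z - m *\<^sub>R x)"
    by (metis norm_scaleR norm_triangle_ineq abs_numeral real_norm_def)
  then show "norm z \<le> norm (z + m *\<^sub>R x)" using \<open>norm (z - m *\<^sub>R x) = norm (z + m *\<^sub>R x)\<close> by simp
qed


lemma strict_conv:
  fixes a b :: "'a::real_normed_vector"
  assumes iso: "\<And>u v::'a. bj_orth u v \<Longrightarrow> norm (u + v) = norm (u - v)"
    and na: "norm a = r" and nb: "norm b = r" and nab: "norm (a + b) = 2 * r"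
  shows "a = b"
proof -
  define m where "m = (1/2::real) *\<^sub>R (a + b)"
  define d where "d = (1/2::real) *\<^sub>R (a - b)"
  define f where "f = (\<lambda>l::real. norm (m + l *\<^sub>R d))"
  have md1: "m + d = a" unfolding m_def d_def by (simp add: algebra_simps scaleR_2[symmetric])
  have md2: "m - d = b" unfolding m_def d_def by (simp add: algebra_simps scaleR_2[symmetric])
  have nm: "norm m = r" unfolding m_def using nab by simp
  have fge: "f l \<ge> r" for l
  proof (cases "l \<ge> 0")
    case True
    have "(1+l) *\<^sub>R m = (m + l *\<^sub>R d) + l *\<^sub>R (m - d)" by (simp add: algebra_simps)
    hence "norm ((1+l) *\<^sub>R m) \<le> norm (m + l *\<^sub>R d) + norm (l *\<^sub>R (m - d))"
      by (metis norm_triangle_ineq)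
    hence "(1+l) * r \<le> f l + l * r" using True nm md2 nb by (simp add: f_def)
    then show ?thesis by (simp add: algebra_simps)
  next
    case False
    have "(1-l) *\<^sub>R m = (m + l *\<^sub>R d) + (-l) *\<^sub>R (m + d)" by (simp add: algebra_simps)
    hence "norm ((1-l) *\<^sub>R m) \<le> norm (m + l *\<^sub>R d) + norm ((-l) *\<^sub>R (m + d))"
      by (metis norm_triangle_ineq)
    hence "(1-l) * r \<le> f l + (-l) * r" using False nm md1 na by (simp add: f_def)
    then show ?thesis by (simp add: algebra_simps)
  qed
  have o1: "bj_orth m d" unfolding bj_orth_def using fge nm by (simp add: f_def)
  have o2: "bj_orth (m + d) d" unfolding bj_orth_def
  proof
    fix l :: real
    have "m + d + l *\<^sub>R d = m + (1 + l) *\<^sub>R d" by (simp add: algebra_simps)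
    then show "norm (m + d) \<le> norm (m + d + l *\<^sub>R d)" using fge[of "1+l"] md1 na by (simp add: f_def)
  qed
  have even: "f (-t) = f t" for t
    using iso_scaled[OF iso o1, of 1 t] by (simp add: f_def)
  have per: "f (t + 2) = f t" for t
  proof -
    have "f (t + 2) = norm ((m + d) + (t+1) *\<^sub>R d)" unfolding f_def by (simp add: algebra_simps scaleR_2)
    also have "\<dots> = norm ((m + d) - (t+1) *\<^sub>R d)"
      using iso_scaled[OF iso o2, of 1 "t+1"] by simp
    also have "\<dots> = f (-t)" unfolding f_def by (simp add: algebra_simps)
    finally show ?thesis using even by simp
  qed
  have fn: "f (2 * real n) = r" for n
  proof (induction n)
    case 0 then show ?case using nm by (simp add: f_def)
  next
    case (Suc n)
    have "f (2 * real (Suc n)) = f (2 * real n + 2)" by (simp add: algebra_simps)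
    then show ?case using per Suc by simp
  qed
  have bound: "2 * real n * norm d \<le> 2 * r" for n
  proof -
    have "(2 * real n) *\<^sub>R d = (m + (2 * real n) *\<^sub>R d) - m" by simp
    hence "norm ((2 * real n) *\<^sub>R d) \<le> norm (m + (2 * real n) *\<^sub>R d) + norm m"
      by (metis norm_triangle_ineq4)
    thus ?thesis using fn[of n] nm by (simp add: f_def)
  qed
  have "norm d = 0"
  proof (rule ccontr)
    assume "norm d \<noteq> 0"
    hence pos: "norm d > 0" by simp
    obtain n :: nat where n: "r / norm d < real n" using reals_Archimedean2 by blast
    hence "r < real n * norm d" using pos by (simp add: field_simps)
    with bound[of n] show False by simp
  qed
  hence "d = 0" by simp
  then show "a = b" using md1 md2 by simp
qed


lemma orth_exists:
  fixes d s :: "'a::real_normed_vector"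
  shows "\<exists>l. bj_orth (d + l *\<^sub>R s) s"
proof (cases "s = 0")
  case True then show ?thesis by (simp add: bj_zero_right)
next
  case False
  hence ns: "norm s > 0" by simp
  define K where "K = 2 * norm d / norm s"
  define h where "h = (\<lambda>l::real. norm (d + l *\<^sub>R s))"
  have K0: "K \<ge> 0" unfolding K_def using ns by simp
  have "continuous_on {-K..K} h" unfolding h_def by (intro continuous_intros)
  then obtain l0 where l0: "l0 \<in> {-K..K}" and mn: "\<forall>y\<in>{-K..K}. h l0 \<le> h y"
    using continuous_attains_inf[of "{-K..K}" h] K0 by auto
  have all: "h l0 \<le> h y" for y
  proof (cases "y \<in> {-K..K}")
    case True then show ?thesis using mn by blast
  next
    case False
    hence yK: "\<bar>y\<bar> > K" by auto
    have "\<bar>y\<bar> * norm s > K * norm s" using yK ns by simp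
    hence big: "\<bar>y\<bar> * norm s > 2 * norm d" unfolding K_def using ns by simp
    have "y *\<^sub>R s = (d + y *\<^sub>R s) - d" by simp
    hence "norm (y *\<^sub>R s) \<le> norm (d + y *\<^sub>R s) + norm d" by (metis norm_triangle_ineq4)
    hence "h y \<ge> norm d" using big unfolding h_def by simp
    moreover have "h l0 \<le> h 0" using mn K0 by simp
    ultimately show ?thesis unfolding h_def by simp
  qed
  have "bj_orth (d + l0 *\<^sub>R s) s" unfolding bj_orth_def
  proof
    fix l :: real
    have "d + l0 *\<^sub>R s + l *\<^sub>R s = d + (l0 + l) *\<^sub>R s" by (simp add: algebra_simps)
    then show "norm (d + l0 *\<^sub>R s) \<le> norm (d + l0 *\<^sub>R s + l *\<^sub>R s)"
      using all[of "l0 + l"] unfolding h_def by metis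
  qed
  then show ?thesis by blast
qed

lemma orth_unique:
  fixes w p :: "'a::real_normed_vector"
  assumes iso: "\<And>u v::'a. bj_orth u v \<Longrightarrow> norm (u + v) = norm (u - v)"
    and w0: "w \<noteq> 0" and o1: "bj_orth w p" and o2: "bj_orth w (p + m *\<^sub>R w)"
  shows "m = 0"
proof -
  define q where "q = p + m *\<^sub>R w"
  have p1: "bj_orth p w" using orth_sym[OF iso o1] .
  have q1: "bj_orth q w" using orth_sym[OF iso o2] unfolding q_def .
  have a1: "norm p \<le> norm q" using p1 unfolding bj_orth_def q_def by blast
  have "norm q \<le> norm (q + (-m) *\<^sub>R w)" using q1 unfolding bj_orth_def by blast
  hence a2: "norm q \<le> norm p" unfolding q_def by simp
  have "norm p \<le> norm (p + (m/2) *\<^sub>R w)" using p1 unfolding bj_orth_def by blast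
  moreover have "p + q = 2 *\<^sub>R (p + (m/2) *\<^sub>R w)" unfolding q_def by (simp add: algebra_simps scaleR_2)
  ultimately have "2 * norm p \<le> norm (p + q)" by simp
  moreover have "norm (p + q) \<le> norm p + norm q" by (rule norm_triangle_ineq)
  ultimately have "norm (p + q) = 2 * norm p" using a1 a2 by simp
  hence "p = q" using strict_conv[OF iso, of p "norm p" q] a1 a2 by simp
  hence "m *\<^sub>R w = 0" unfolding q_def by simp
  then show ?thesis using w0 by simp
qed


lemma eqnorm_orth:
  fixes u v :: "'a::real_normed_vector"
  assumes iso: "\<And>u v::'a. bj_orth u v \<Longrightarrow> norm (u + v) = norm (u - v)"
    and e: "norm u = norm v"
  shows "bj_orth (u + v) (u - v)"
proof (cases "u + v = 0")
  case True then show ?thesis by (simp add: bj_zero_left)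
next
  case False
  define s where "s = u + v"
  define d where "d = u - v"
  obtain c where oc: "bj_orth (d + c *\<^sub>R s) s" using orth_exists by blast
  define q where "q = d + c *\<^sub>R s"
  have qs: "bj_orth q s" using oc unfolding q_def .
  have sq: "bj_orth s q" using orth_sym[OF iso qs] .
  define g where "g = (\<lambda>t::real. norm (t *\<^sub>R s + q))"
  have gmin: "g 0 \<le> g t" for t
    using qs unfolding bj_orth_def g_def by (simp add: add.commute)
  have geven: "g (-t) = g t" for t
  proof -
    have "(-t) *\<^sub>R s + q = -(t *\<^sub>R s - 1 *\<^sub>R q)" by simp
    hence "g (-t) = norm (t *\<^sub>R s - 1 *\<^sub>R q)" unfolding g_def by (metis norm_minus_cancel)
    also have "\<dots> = g t" unfolding g_def using iso_scaled[OF iso sq, of t 1] by simp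
    finally show ?thesis .
  qed
  have u2: "2 *\<^sub>R u = (1 - c) *\<^sub>R s + q" unfolding q_def s_def d_def
    by (simp add: algebra_simps scaleR_2)
  have v2: "2 *\<^sub>R v = (1 + c) *\<^sub>R s - 1 *\<^sub>R q" unfolding q_def s_def d_def
    by (simp add: algebra_simps scaleR_2)
  have "g (1 - c) = g (1 + c)"
  proof -
    have "g (1 - c) = 2 * norm u" unfolding g_def using u2[symmetric] by simp
    also have "\<dots> = 2 * norm v" using e by simp
    also have "\<dots> = norm ((1 + c) *\<^sub>R s - 1 *\<^sub>R q)" using v2[symmetric] by simp
    also have "\<dots> = g (1 + c)" unfolding g_def using iso_scaled[OF iso sq, of "1+c" 1] by simp
    finally show ?thesis .
  qed
  have c0: "c = 0"
  proof (rule ccontr)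
    assume cne: "c \<noteq> 0"
    define A where "A = 1 + \<bar>c\<bar>"
    define B where "B = \<bar>1 - \<bar>c\<bar>\<bar>"
    have gB: "g B = g (1 - \<bar>c\<bar>)"
    proof (cases "1 - \<bar>c\<bar> \<ge> 0")
      case True then show ?thesis unfolding B_def by simp
    next
      case False
      hence "B = - (1 - \<bar>c\<bar>)" unfolding B_def by simp
      then show ?thesis using geven[of "1 - \<bar>c\<bar>"] by simp
    qed
    have "g (1 - \<bar>c\<bar>) = g (1 + \<bar>c\<bar>)"
    proof (cases "c \<ge> 0")
      case True then show ?thesis using \<open>g (1 - c) = g (1 + c)\<close> by simp
    next
      case False then show ?thesis using \<open>g (1 - c) = g (1 + c)\<close> by simp
    qed
    hence gAB: "g A = g B" using gB unfolding A_def by simp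
    have A0: "A > 0" and BA: "B < A" and B0: "B \<ge> 0" unfolding A_def B_def using cne by auto
    define th where "th = B / A"
    have th0: "0 \<le> th" "th < 1" unfolding th_def using A0 BA B0 by auto
    have "B *\<^sub>R s + q = th *\<^sub>R (A *\<^sub>R s + q) + (1 - th) *\<^sub>R q"
      unfolding th_def using A0 by (simp add: algebra_simps)
    hence "norm (B *\<^sub>R s + q) \<le> norm (th *\<^sub>R (A *\<^sub>R s + q)) + norm ((1 - th) *\<^sub>R q)"
      by (metis norm_triangle_ineq)
    hence "g B \<le> th * g A + (1 - th) * g 0"
      unfolding g_def using th0 by simp
    hence "(1 - th) * g A \<le> (1 - th) * g 0" using gAB by (simp add: algebra_simps)
    hence gA: "g A \<le> g 0" using th0 by simp
    have "(A/2) *\<^sub>R s + q = (1/2) *\<^sub>R (A *\<^sub>R s + q) + (1/2) *\<^sub>R q"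
    proof -
      have "(1/2::real) *\<^sub>R q + (1/2) *\<^sub>R q = q"
        by (metis scaleR_add_left field_sum_of_halves scaleR_one)
      then show ?thesis by (simp add: algebra_simps)
    qed
    hence "norm ((A/2) *\<^sub>R s + q) \<le> norm ((1/2) *\<^sub>R (A *\<^sub>R s + q)) + norm ((1/2::real) *\<^sub>R q)"
      by (metis norm_triangle_ineq)
    hence "g (A/2) \<le> (1/2) * g A + (1/2) * g 0" unfolding g_def by simp
    hence "g (A/2) \<le> g 0" using gA by simp
    hence gA2: "g (A/2) = g 0" using gmin[of "A/2"] by simp
    have gA0: "g A = g 0" using gA gmin[of A] by simp
    have "(A *\<^sub>R s + q) + q = 2 *\<^sub>R ((A/2) *\<^sub>R s + q)" by (simp add: algebra_simps scaleR_2)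
    hence "norm ((A *\<^sub>R s + q) + q) = 2 * g 0" using gA2 unfolding g_def by simp
    hence n3: "norm ((A *\<^sub>R s + q) + q) = 2 * g 0" .
    have n1: "norm (A *\<^sub>R s + q) = g 0" using gA0 unfolding g_def .
    have n2: "norm q = g 0" unfolding g_def by simp
    have "A *\<^sub>R s + q = q" by (rule strict_conv[OF iso n1 n2 n3])
    hence "s = 0" using A0 by simp
    then show False using False unfolding s_def by simp
  qed
  then show ?thesis using sq unfolding q_def s_def d_def by simp
qed


lemma refl_orth:
  fixes x z :: "'a::real_normed_vector"
  assumes iso: "\<And>u v::'a. bj_orth u v \<Longrightarrow> norm (u + v) = norm (u - v)"
    and nx: "norm x = 1" and o: "bj_orth x z" and nw: "norm (a *\<^sub>R x + b *\<^sub>R z) = 1"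
  shows "bj_orth (a *\<^sub>R x + b *\<^sub>R z) ((1 - a^2) *\<^sub>R x - (a*b) *\<^sub>R z)"
  unfolding bj_orth_def
proof
  fix l :: real
  define w where "w = a *\<^sub>R x + b *\<^sub>R z"
  define s1 where "s1 = x + w"
  define d1 where "d1 = x - w"
  have o1: "bj_orth s1 d1" unfolding s1_def d1_def
    using eqnorm_orth[OF iso, of x w] nx nw unfolding w_def by simp
  define al where "al = 1/2 + l * (1 - a) / 2"
  define be where "be = 1/2 - l * (1 + a) / 2"
  have e1: "w + l *\<^sub>R ((1 - a^2) *\<^sub>R x - (a*b) *\<^sub>R z) = al *\<^sub>R s1 - be *\<^sub>R d1"
  proof -
    have "al *\<^sub>R s1 - be *\<^sub>R d1 = (al * (1 + a) - be * (1 - a)) *\<^sub>R x + (al * b + be * b) *\<^sub>R z"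
      unfolding s1_def d1_def w_def by (simp add: algebra_simps)
    also have "\<dots> = (a + l * (1 - a^2)) *\<^sub>R x + (b - l * (a * b)) *\<^sub>R z"
    proof -
      have c1: "al * (1 + a) - be * (1 - a) = a + l * (1 - a^2)"
        unfolding al_def be_def by (simp add: field_simps power2_eq_square)
      have c2: "al * b + be * b = b - l * (a * b)"
        unfolding al_def be_def by (simp add: field_simps)
      show ?thesis by (simp only: c1 c2)
    qed
    also have "\<dots> = w + l *\<^sub>R ((1 - a^2) *\<^sub>R x - (a*b) *\<^sub>R z)"
      unfolding w_def by (simp add: algebra_simps)
    finally show ?thesis by simp
  qed
  have e2: "al *\<^sub>R s1 + be *\<^sub>R d1 = x + (l * b) *\<^sub>R z"
  proof -
    have "al *\<^sub>R s1 + be *\<^sub>R d1 = (al * (1 + a) + be * (1 - a)) *\<^sub>R x + (al * b - be * b) *\<^sub>R z"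
      unfolding s1_def d1_def w_def by (simp add: algebra_simps)
    also have "\<dots> = 1 *\<^sub>R x + (l * b) *\<^sub>R z"
    proof -
      have c1: "al * (1 + a) + be * (1 - a) = 1"
        unfolding al_def be_def by (simp add: field_simps)
      have c2: "al * b - be * b = l * b"
        unfolding al_def be_def by (simp add: field_simps)
      show ?thesis by (simp only: c1 c2)
    qed
    finally show ?thesis by simp
  qed
  have "norm (w + l *\<^sub>R ((1 - a^2) *\<^sub>R x - (a*b) *\<^sub>R z)) = norm (x + (l * b) *\<^sub>R z)"
    using e1 e2 iso_scaled[OF iso o1, of al be] by simp
  moreover have "norm x \<le> norm (x + (l * b) *\<^sub>R z)" using o unfolding bj_orth_def by blast
  ultimately show "norm w \<le> norm (w + l *\<^sub>R ((1 - a^2) *\<^sub>R x - (a*b) *\<^sub>R z))"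
    using nx nw w_def by simp
qed





lemma coef1: "b \<noteq> 0 \<Longrightarrow> (-a/b)*(1-a^2) + ((1 - a^2 - b^2)/b)*a = -(b*(a::real))"
  by (simp add: field_simps power2_eq_square)
lemma coef2: "b \<noteq> 0 \<Longrightarrow> (-a/b)*(-(a*b)) + ((1 - a^2 - b^2)/b)*b = 1 - (b::real)^2"
  by (simp add: field_simps power2_eq_square)

lemma pyth_unit:
  fixes x z :: "'a::real_normed_vector"
  assumes iso: "\<And>u v::'a. bj_orth u v \<Longrightarrow> norm (u + v) = norm (u - v)"
    and nx: "norm x = 1" and nz: "norm z = 1" and o: "bj_orth x z"
    and nw: "norm (a *\<^sub>R x + b *\<^sub>R z) = 1"
  shows "a^2 + b^2 = 1"
proof (cases "b = 0")
  case True
  then have "\<bar>a\<bar> = 1" using nw nx by simp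
  then have "a^2 = 1" by (metis power2_abs one_power2)
  then show ?thesis using True by simp
next
  case False
  define w where "w = a *\<^sub>R x + b *\<^sub>R z"
  define V1 where "V1 = (1 - a^2) *\<^sub>R x - (a*b) *\<^sub>R z"
  define V2 where "V2 = (1 - b^2) *\<^sub>R z - (b*a) *\<^sub>R x"
  define D where "D = 1 - a^2 - b^2"
  have o1: "bj_orth w V1" unfolding w_def V1_def by (rule refl_orth[OF iso nx o nw])
  have oz: "bj_orth z x" by (rule orth_sym[OF iso o])
  have nw2: "norm (b *\<^sub>R z + a *\<^sub>R x) = 1" using nw by (simp add: add.commute)
  have o2': "bj_orth (b *\<^sub>R z + a *\<^sub>R x) V2" unfolding V2_def by (rule refl_orth[OF iso nz oz nw2])
  have o2: "bj_orth w V2" using o2' unfolding w_def by (simp add: add.commute)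
  define p where "p = (-a/b) *\<^sub>R V1"
  have op: "bj_orth w p" unfolding p_def using bj_scale[OF o1, of 1 "-a/b"] by simp
  have eq: "V2 = p + (D/b) *\<^sub>R w"
  proof -
    have "p + (D/b) *\<^sub>R w = ((-a/b)*(1-a^2) + (D/b)*a) *\<^sub>R x + ((-a/b)*(-(a*b)) + (D/b)*b) *\<^sub>R z"
      unfolding p_def V1_def w_def by (simp add: algebra_simps)
    also have "\<dots> = (-(b*a)) *\<^sub>R x + (1 - b^2) *\<^sub>R z"
    proof -
      have c1: "(-a/b)*(1-a^2) + (D/b)*a = -(b*a)"
        unfolding D_def using coef1[OF False] .
      have c2: "(-a/b)*(-(a*b)) + (D/b)*b = 1 - b^2"
        unfolding D_def using coef2[OF False] .
      show ?thesis by (simp only: c1 c2)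
    qed
    also have "\<dots> = V2" unfolding V2_def by (simp add: algebra_simps)
    finally show ?thesis by simp
  qed
  have w0: "w \<noteq> 0" using nw unfolding w_def by auto
  have o3: "bj_orth w (p + (D/b) *\<^sub>R w)" using o2 eq by simp
  have "D/b = 0" by (rule orth_unique[OF iso w0 op o3])
  then show ?thesis using False unfolding D_def by simp
qed


lemma pyth:
  fixes x z :: "'a::real_normed_vector"
  assumes iso: "\<And>u v::'a. bj_orth u v \<Longrightarrow> norm (u + v) = norm (u - v)"
    and o: "bj_orth x z"
  shows "(norm (a *\<^sub>R x + b *\<^sub>R z))^2 = a^2 * (norm x)^2 + b^2 * (norm z)^2"
proof (cases "x = 0 \<or> z = 0")
  case True
  then show ?thesis by (auto simp: power_mult_distrib)
next
  case False
  hence x0: "x \<noteq> 0" and z0: "z \<noteq> 0" by auto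
  define x1 where "x1 = (1 / norm x) *\<^sub>R x"
  define z1 where "z1 = (1 / norm z) *\<^sub>R z"
  have nx1: "norm x1 = 1" unfolding x1_def using x0 by simp
  have nz1: "norm z1 = 1" unfolding z1_def using z0 by simp
  have o1: "bj_orth x1 z1" unfolding x1_def z1_def by (rule bj_scale[OF o])
  define a' where "a' = a * norm x"
  define b' where "b' = b * norm z"
  have veq: "a *\<^sub>R x + b *\<^sub>R z = a' *\<^sub>R x1 + b' *\<^sub>R z1"
    unfolding a'_def b'_def x1_def z1_def using x0 z0 by simp
  have rhs: "a^2 * (norm x)^2 + b^2 * (norm z)^2 = a'^2 + b'^2"
    unfolding a'_def b'_def by (simp add: power_mult_distrib)
  define t where "t = norm (a' *\<^sub>R x1 + b' *\<^sub>R z1)"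
  show ?thesis
  proof (cases "t = 0")
    case True
    hence sum0: "a' *\<^sub>R x1 + b' *\<^sub>R z1 = 0" unfolding t_def by simp
    have a0: "a' = 0"
    proof (rule ccontr)
      assume an: "a' \<noteq> 0"
      have "x1 + (b'/a') *\<^sub>R z1 = (1/a') *\<^sub>R (a' *\<^sub>R x1 + b' *\<^sub>R z1)"
        using an by (simp add: algebra_simps)
      hence "norm (x1 + (b'/a') *\<^sub>R z1) = 0" using sum0 by simp
      moreover have "norm x1 \<le> norm (x1 + (b'/a') *\<^sub>R z1)" using o1 unfolding bj_orth_def by blast
      ultimately show False using nx1 by simp
    qed
    hence "b' *\<^sub>R z1 = 0" using sum0 by simp
    hence b0: "b' = 0" using nz1 by auto
    show ?thesis using veq rhs a0 b0 by simp
  next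
    case False
    hence tpos: "t > 0" unfolding t_def by simp
    have "(a'/t) *\<^sub>R x1 + (b'/t) *\<^sub>R z1 = (1/t) *\<^sub>R (a' *\<^sub>R x1 + b' *\<^sub>R z1)"
      by (simp add: algebra_simps divide_inverse)
    hence "norm ((a'/t) *\<^sub>R x1 + (b'/t) *\<^sub>R z1) = 1" using tpos unfolding t_def by simp
    hence "(a'/t)^2 + (b'/t)^2 = 1" using pyth_unit[OF iso nx1 nz1 o1] by blast
    hence "a'^2 + b'^2 = t^2" using tpos by (simp add: field_simps power_divide)
    then show ?thesis using veq rhs unfolding t_def by simp
  qed
qed

lemma parallelogram:
  fixes u v :: "'a::real_normed_vector"
  assumes iso: "\<And>u v::'a. bj_orth u v \<Longrightarrow> norm (u + v) = norm (u - v)"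
  shows "(norm (u + v))^2 + (norm (u - v))^2 = 2 * (norm u)^2 + 2 * (norm v)^2"
proof -
  obtain c where oc: "bj_orth (v + c *\<^sub>R u) u" using orth_exists by blast
  define q where "q = v + c *\<^sub>R u"
  have uq: "bj_orth u q" using orth_sym[OF iso oc] unfolding q_def .
  have e1: "u + v = (1 - c) *\<^sub>R u + 1 *\<^sub>R q" unfolding q_def by (simp add: algebra_simps)
  have e2: "u - v = (1 + c) *\<^sub>R u + (-1) *\<^sub>R q" unfolding q_def by (simp add: algebra_simps)
  have e3: "v = (- c) *\<^sub>R u + 1 *\<^sub>R q" unfolding q_def by (simp add: algebra_simps)
  have "(norm (u + v))^2 = (1 - c)^2 * (norm u)^2 + (norm q)^2"
    unfolding e1 using pyth[OF iso uq, of "1 - c" 1] by simp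
  moreover have "(norm (u - v))^2 = (1 + c)^2 * (norm u)^2 + (norm q)^2"
    unfolding e2 using pyth[OF iso uq, of "1 + c" "-1"] by simp
  moreover have "(norm v)^2 = c^2 * (norm u)^2 + (norm q)^2"
    using pyth[OF iso uq, of "-c" 1] e3 by simp
  ultimately show ?thesis by (simp add: algebra_simps power2_eq_square)
qed


definition pip :: "'a::real_normed_vector \<Rightarrow> 'a \<Rightarrow> real" where
  "pip x y = ((norm (x + y))^2 - (norm (x - y))^2) / 4"

lemma pip_sym: "pip x y = pip y x"
  unfolding pip_def by (simp add: add.commute norm_minus_commute)

lemma pip_self: "pip x x = (norm x)^2"
  unfolding pip_def by (simp add: scaleR_2[symmetric] power_mult_distrib)

lemma pip_hom:
  fixes x y :: "'a::real_normed_vector"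
  assumes iso: "\<And>u v::'a. bj_orth u v \<Longrightarrow> norm (u + v) = norm (u - v)"
  shows "pip (c *\<^sub>R x) y = c * pip x y"
proof -
  obtain c0 where oc: "bj_orth (y + c0 *\<^sub>R x) x" using orth_exists by blast
  define q where "q = y + c0 *\<^sub>R x"
  define al where "al = - c0"
  have xq: "bj_orth x q" using orth_sym[OF iso oc] unfolding q_def .
  have gen: "pip (e *\<^sub>R x) y = e * al * (norm x)^2" for e
  proof -
    have e1: "e *\<^sub>R x + y = (e + al) *\<^sub>R x + 1 *\<^sub>R q" unfolding q_def al_def by (simp add: algebra_simps)
    have e2: "e *\<^sub>R x - y = (e - al) *\<^sub>R x + (-1) *\<^sub>R q" unfolding q_def al_def by (simp add: algebra_simps)
    have "(norm (e *\<^sub>R x + y))^2 = (e + al)^2 * (norm x)^2 + (norm q)^2"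
      unfolding e1 using pyth[OF iso xq, of "e + al" 1] by simp
    moreover have "(norm (e *\<^sub>R x - y))^2 = (e - al)^2 * (norm x)^2 + (norm q)^2"
      unfolding e2 using pyth[OF iso xq, of "e - al" "-1"] by simp
    ultimately show ?thesis unfolding pip_def by (simp add: algebra_simps power2_eq_square)
  qed
  show ?thesis using gen[of c] gen[of 1] by simp
qed

lemma pip_add:
  fixes x y z :: "'a::real_normed_vector"
  assumes iso: "\<And>u v::'a. bj_orth u v \<Longrightarrow> norm (u + v) = norm (u - v)"
  shows "pip (x + y) z = pip x z + pip y z"
proof -
  have p1: "(norm ((x + z) + (y + z)))^2 + (norm ((x + z) - (y + z)))^2 = 2 * (norm (x + z))^2 + 2 * (norm (y + z))^2"
    by (rule parallelogram[OF iso])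
  have p2: "(norm ((x - z) + (y - z)))^2 + (norm ((x - z) - (y - z)))^2 = 2 * (norm (x - z))^2 + 2 * (norm (y - z))^2"
    by (rule parallelogram[OF iso])
  have v1: "(x + z) + (y + z) = (x + y) + 2 *\<^sub>R z" by (simp add: algebra_simps scaleR_2)
  have v2: "(x - z) + (y - z) = (x + y) - 2 *\<^sub>R z" by (simp add: algebra_simps scaleR_2)
  have v3: "(x + z) - (y + z) = x - y" by simp
  have v4: "(x - z) - (y - z) = x - y" by simp
  have "pip (x + y) (2 *\<^sub>R z) = 2 * pip (x + y) z"
    using pip_hom[OF iso, of 2 z "x + y"] pip_sym by metis
  moreover have "pip (x + y) (2 *\<^sub>R z) = 2 * (pip x z + pip y z)"
  proof -
    have q1: "(norm (x + y + 2 *\<^sub>R z))^2 = 2 * (norm (x + z))^2 + 2 * (norm (y + z))^2 - (norm (x - y))^2"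
      using p1[unfolded v1 v3] by linarith
    have q2: "(norm (x + y - 2 *\<^sub>R z))^2 = 2 * (norm (x - z))^2 + 2 * (norm (y - z))^2 - (norm (x - y))^2"
      using p2[unfolded v2 v4] by linarith
    show ?thesis unfolding pip_def q1 q2 by (simp add: field_simps)
  qed
  ultimately show ?thesis by simp
qed


lemma cpp_iso_le:
  fixes x z :: "'a::real_normed_vector"
  assumes H: "\<forall>x::'a. \<forall>r>0. norm x = 1 \<longrightarrow> CPP x x r 1"
    and o: "bj_orth x z"
  shows "norm (x - z) \<le> norm (x + z)"
proof (cases "x = 0 \<or> z = 0")
  case True then show ?thesis by (auto simp: norm_minus_commute)
next
  case False
  hence x0: "x \<noteq> 0" and z0: "z \<noteq> 0" by auto
  define x1 where "x1 = (1 / norm x) *\<^sub>R x"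
  define z1 where "z1 = (1 / norm z) *\<^sub>R z"
  have nx1: "norm x1 = 1" unfolding x1_def using x0 by simp
  have nz1: "norm z1 = 1" unfolding z1_def using z0 by simp
  have o1: "bj_orth x1 z1" unfolding x1_def z1_def by (rule bj_scale[OF o])
  have o2: "bj_orth x1 (-z1)" using bj_scale[OF o1, of 1 "-1"] by simp
  have nmz1: "norm (-z1) = 1" using nz1 by simp
  define t where "t = norm (x + z)"
  have tpos: "t > 0"
  proof (rule ccontr)
    assume "\<not> t > 0"
    hence "x + z = 0" unfolding t_def by simp
    hence zx: "z = -x" using minus_unique[of x z] by (simp add: add.commute)
    have "norm x \<le> norm (x + 1 *\<^sub>R z)" using o unfolding bj_orth_def by blast
    thus False using zx x0 by simp
  qed
  define a where "a = norm x / t"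
  define b where "b = norm z / t"
  have v1: "a *\<^sub>R x1 + b *\<^sub>R z1 = (1/t) *\<^sub>R (x + z)"
    unfolding a_def b_def x1_def z1_def using x0 z0 by (simp add: algebra_simps)
  have v2: "a *\<^sub>R x1 + b *\<^sub>R (1 *\<^sub>R (-z1)) = (1/t) *\<^sub>R (x - z)"
    unfolding a_def b_def x1_def z1_def using x0 z0 by (simp add: algebra_simps)
  have n1: "norm (a *\<^sub>R x1 + b *\<^sub>R z1) = 1" unfolding v1 t_def using tpos unfolding t_def by simp
  have inb: "a *\<^sub>R x1 + b *\<^sub>R z1 \<in> ball x1 3"
  proof -
    have "dist x1 (a *\<^sub>R x1 + b *\<^sub>R z1) \<le> norm x1 + norm (a *\<^sub>R x1 + b *\<^sub>R z1)"
      unfolding dist_norm by (rule norm_triangle_ineq4)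
    thus ?thesis using nx1 n1 by (simp add: mem_ball)
  qed
  have "CPP x1 x1 3 1" using H nx1 by (metis zero_less_numeral)
  hence "\<forall>z w. \<forall>a b::real.
        bj_orth x1 z \<and> norm z = 1 \<and> bj_orth x1 w \<and> norm w = 1 \<and>
        a *\<^sub>R x1 + b *\<^sub>R z \<in> ball x1 3 \<and> norm (a *\<^sub>R x1 + b *\<^sub>R z) = 1
        \<longrightarrow> norm (a *\<^sub>R x1 + b *\<^sub>R (1 *\<^sub>R w)) \<le> 1" unfolding CPP_def by (elim conjE)
  hence "norm (a *\<^sub>R x1 + b *\<^sub>R (1 *\<^sub>R (-z1))) \<le> 1"
  proof -
    assume A: "\<forall>z w. \<forall>a b::real.
        bj_orth x1 z \<and> norm z = 1 \<and> bj_orth x1 w \<and> norm w = 1 \<and>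
        a *\<^sub>R x1 + b *\<^sub>R z \<in> ball x1 3 \<and> norm (a *\<^sub>R x1 + b *\<^sub>R z) = 1
        \<longrightarrow> norm (a *\<^sub>R x1 + b *\<^sub>R (1 *\<^sub>R w)) \<le> 1"
    have pre: "bj_orth x1 z1 \<and> norm z1 = 1 \<and> bj_orth x1 (-z1) \<and> norm (-z1) = 1 \<and>
        a *\<^sub>R x1 + b *\<^sub>R z1 \<in> ball x1 3 \<and> norm (a *\<^sub>R x1 + b *\<^sub>R z1) = 1"
      using o1 o2 nz1 nmz1 inb n1 by (intro conjI)
    show ?thesis using A[rule_format, OF pre] by simp
  qed
  hence "norm ((1/t) *\<^sub>R (x - z)) \<le> 1" unfolding v2 .
  hence "norm (x - z) / t \<le> 1" using tpos by simp
  thus ?thesis using tpos unfolding t_def by (simp add: field_simps)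
qed

lemma cpp_iso:
  fixes x z :: "'a::real_normed_vector"
  assumes H: "\<forall>x::'a. \<forall>r>0. norm x = 1 \<longrightarrow> CPP x x r 1"
    and o: "bj_orth x z"
  shows "norm (x + z) = norm (x - z)"
proof -
  have o2: "bj_orth x (-z)" using bj_scale[OF o, of 1 "-1"] by simp
  show ?thesis using cpp_iso_le[OF H o] cpp_iso_le[OF H o2] by simp
qed

lemma arith_orth0: fixes c k l :: real assumes k0: "k \<ge> 0" and ld: "l = - c / (k + 1)"
  and h: "0 \<le> 2 * l * c + l^2 * k"
  shows "c = 0"
proof -
  have ml: "(k + 1) * l = - c" using k0 unfolding ld by simp
  have e0: "(k + 1)^2 * (2 * l * c + l^2 * k) = 2 * (k+1) * c * ((k+1) * l) + ((k+1)*l)^2 * k"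
    by (simp add: algebra_simps power2_eq_square)
  have e: "(k + 1)^2 * (2 * l * c + l^2 * k) = - (c^2 * (k + 2))"
    unfolding e0 ml by (simp add: algebra_simps power2_eq_square)
  have "0 \<le> (k + 1)^2 * (2 * l * c + l^2 * k)" using h by simp
  hence "c^2 * (k + 2) \<le> 0" using e by linarith
  hence "c^2 \<le> 0" using k0 by (simp add: mult_le_0_iff)
  thus ?thesis by simp
qed

lemma fwd:
  fixes ip :: "'a::real_normed_vector \<Rightarrow> 'a \<Rightarrow> real"
  assumes sym: "\<forall>x y. ip x y = ip y x"
    and add: "\<forall>x y z. ip (x + y) z = ip x z + ip y z"
    and hom: "\<forall>c x y. ip (c *\<^sub>R x) y = c * ip x y"
    and pos: "\<forall>x. ip x x \<ge> 0"
    and nrm: "\<forall>x. norm x = sqrt (ip x x)"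
  shows "\<forall>x::'a. \<forall>r>0. norm x = 1 \<longrightarrow> CPP x x r 1"
proof -
  have sq: "(norm v)^2 = ip v v" for v using nrm pos by simp
  have expand: "(norm (a *\<^sub>R x + b *\<^sub>R z))^2 = a^2 * (norm x)^2 + 2*a*b*ip x z + b^2 * (norm z)^2"
    for a b :: real and x z :: 'a
  proof -
    have l: "ip (a *\<^sub>R x + b *\<^sub>R z) v = a * ip x v + b * ip z v" for v
      using add[rule_format, of "a *\<^sub>R x" "b *\<^sub>R z" v] hom[rule_format, of a x v] hom[rule_format, of b z v]
      by simp
    define u where "u = a *\<^sub>R x + b *\<^sub>R z"
    have "ip u u = a * ip x u + b * ip z u" unfolding u_def by (rule l)
    also have "ip x u = a * ip x x + b * ip z x" using l[of x] sym[rule_format, of x u] unfolding u_def by simp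
    also have "ip z u = a * ip x z + b * ip z z" using l[of z] sym[rule_format, of z u] unfolding u_def by simp
    finally have "ip u u = a * (a * ip x x + b * ip z x) + b * (a * ip x z + b * ip z z)" .
    moreover have "ip z x = ip x z" using sym by blast
    ultimately show ?thesis using sq[of u] sq[of x] sq[of z] unfolding u_def
      by (simp add: algebra_simps power2_eq_square)
  qed
  have orth0: "ip x z = 0" if o: "bj_orth x z" for x z :: 'a
  proof -
    define c where "c = ip x z"
    define k where "k = (norm z)^2"
    have k0: "k \<ge> 0" unfolding k_def by simp
    define l where "l = - c / (k + 1)"
    have "norm x \<le> norm (x + l *\<^sub>R z)" using o unfolding bj_orth_def by blast
    hence "(norm x)^2 \<le> (norm (x + l *\<^sub>R z))^2" by (simp add: power_mono)
    also have "\<dots> = (norm x)^2 + 2 * l * c + l^2 * k"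
      using expand[of 1 x l z] unfolding c_def k_def by simp
    finally have h: "0 \<le> 2 * l * c + l^2 * k" by simp
    have "c = 0" by (rule arith_orth0[OF k0 l_def h])
    thus ?thesis unfolding c_def .
  qed
  show ?thesis
  proof (intro allI impI)
    fix x :: 'a and r :: real
    assume r: "r > 0" and nx: "norm x = 1"
    show "CPP x x r 1" unfolding CPP_def
    proof (intro conjI allI impI)
      fix z w :: 'a and a b :: real
      assume h: "bj_orth x z \<and> norm z = 1 \<and> bj_orth x w \<and> norm w = 1 \<and>
        a *\<^sub>R x + b *\<^sub>R z \<in> ball x r \<and> norm (a *\<^sub>R x + b *\<^sub>R z) = 1"
      have "(norm (a *\<^sub>R x + b *\<^sub>R w))^2 = (norm (a *\<^sub>R x + b *\<^sub>R z))^2"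
      proof -
        have "ip x z = 0" "ip x w = 0" using orth0 h by auto
        then show ?thesis using expand[of a x b z] expand[of a x b w] h by simp
      qed
      hence "(norm (a *\<^sub>R x + b *\<^sub>R w))^2 = 1" using h by simp
      hence "norm (a *\<^sub>R x + b *\<^sub>R w) = 1"
        using norm_ge_zero[of "a *\<^sub>R x + b *\<^sub>R w"] by (auto simp: power2_eq_1_iff)
      thus "norm (a *\<^sub>R x + b *\<^sub>R (1 *\<^sub>R w)) \<le> 1" by simp
    qed (use r nx in auto)
  qed
qed

theorem mainTheorem20:
  assumes "dim_gt_one TYPE('a::banach)"
  shows "norm_from_inner_product TYPE('a) \<longleftrightarrow>
         (\<forall>x::'a. \<forall>r>0. norm x = 1 \<longrightarrow> CPP x x r 1)"
proof
  assume "norm_from_inner_product TYPE('a)"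
  then obtain ip :: "'a \<Rightarrow> 'a \<Rightarrow> real" where
    "\<forall>x y. ip x y = ip y x" "\<forall>x y z. ip (x + y) z = ip x z + ip y z"
    "\<forall>c x y. ip (c *\<^sub>R x) y = c * ip x y" "\<forall>x. ip x x \<ge> 0" "\<forall>x. norm x = sqrt (ip x x)"
    unfolding norm_from_inner_product_def by blast
  then show "\<forall>x::'a. \<forall>r>0. norm x = 1 \<longrightarrow> CPP x x r 1" by (rule fwd)
next
  assume H: "\<forall>x::'a. \<forall>r>0. norm x = 1 \<longrightarrow> CPP x x r 1"
  have iso: "\<And>u v::'a. bj_orth u v \<Longrightarrow> norm (u + v) = norm (u - v)"
    using cpp_iso[OF H] by blast
  show "norm_from_inner_product TYPE('a)"
    unfolding norm_from_inner_product_def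
  proof (intro exI[of _ "pip :: 'a \<Rightarrow> 'a \<Rightarrow> real"] conjI allI)
    fix x y :: 'a show "pip x y = pip y x" by (rule pip_sym)
  next
    fix x y z :: 'a show "pip (x + y) z = pip x z + pip y z" by (rule pip_add[OF iso])
  next
    fix c and x y :: 'a show "pip (c *\<^sub>R x) y = c * pip x y" by (rule pip_hom[OF iso])
  next
    fix x :: 'a show "pip x x \<ge> 0" by (simp add: pip_self)
  next
    fix x :: 'a show "norm x = sqrt (pip x x)" by (simp add: pip_self)
  qed
qed


end
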